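(* Let $q\in\mathbb{C}[x_0,\dots,x_3]_2$ be a quadratic form of rank four, let $[l_1],[l_2]\in\mathbb{P}(S_1)$ and assume that $q_{l_1}(l_2^2)=0$ (equivalently $q_{l_2}(l_1^2)=0$). Then $p_{l_2}(l_1)=p_{l_1}(l_2)=0$ if and only if $[l_1]\in Q^{-1}$ or $[l_2]\in Q^{-1}$.
   Context: $S=\mathbb{C}[x_0,\dots,x_3]$, $T=\mathbb{C}[y_0,\dots,y_3]$; $T$ acts on $S$ and $S$ acts on $T$ by differentiation. For $l\in S_1$, $q_l\in T_2$ is the unique form with $q_l(q^2)=l^2$. $q^{-1}\in T_2$ is the inverse quadric (the quadric with $S_1\to T_1$, $l\mapsto l(q^{-1})$, inverse to $T_1\to S_1$, $g\mapsto g(q)$), $Q^{-1}=\{q^{-1}=0\}$, and $p_l=l(q^{-1})\in T_1$ (so $p_{l_2}(l_1)\in\mathbb{C}$ is $p_{l_2}$ applied to $l_1$). *)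

theory Defs
  imports "HOL-Library.Poly_Mapping" "HOL-Analysis.Analysis"
begin

text \<open>Polynomials in variables with indices 0..3 over the complex numbers, represented as
finitely supported coefficient functions on monomials (exponent vectors). The same type is
used for S = C[x_0..x_3] and for T = C[y_0..y_3].\<close>

type_synonym mono = "nat \<Rightarrow>\<^sub>0 nat"
type_synonym cpoly = "mono \<Rightarrow>\<^sub>0 complex"

definition mdeg :: "mono \<Rightarrow> nat" where
  "mdeg m = (\<Sum>i\<in>Poly_Mapping.keys m. Poly_Mapping.lookup m i)"

definition Var :: "nat \<Rightarrow> cpoly" where
  "Var i = Poly_Mapping.single (Poly_Mapping.single i 1) 1"

definition Forms :: "nat \<Rightarrow> cpoly set" where
  "Forms d = {f. \<forall>m\<in>Poly_Mapping.keys f. Poly_Mapping.keys m \<subseteq> {0..<4} \<and> mdeg m = d}"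

text \<open>Apolarity action: g(f), the variable y_i acting as the partial derivative d/dx_i.\<close>
definition mdvd :: "mono \<Rightarrow> mono \<Rightarrow> bool" where
  "mdvd b a \<longleftrightarrow> (\<forall>i. Poly_Mapping.lookup b i \<le> Poly_Mapping.lookup a i)"

definition dcoef :: "mono \<Rightarrow> mono \<Rightarrow> complex" where
  "dcoef a b = (\<Prod>i\<in>Poly_Mapping.keys a. of_nat (fact (Poly_Mapping.lookup a i)) / of_nat (fact (Poly_Mapping.lookup a i - Poly_Mapping.lookup b i)))"

definition act :: "cpoly \<Rightarrow> cpoly \<Rightarrow> cpoly" where
  "act g f = (\<Sum>b\<in>Poly_Mapping.keys g. \<Sum>a\<in>{a\<in>Poly_Mapping.keys f. mdvd b a}.
      Poly_Mapping.single (a - b) (Poly_Mapping.lookup g b * Poly_Mapping.lookup f a * dcoef a b))"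

definition const :: "cpoly \<Rightarrow> complex" where
  "const f = Poly_Mapping.lookup f 0"

definition peval :: "cpoly \<Rightarrow> (nat \<Rightarrow> complex) \<Rightarrow> complex" where
  "peval f c = (\<Sum>m\<in>Poly_Mapping.keys f. Poly_Mapping.lookup f m * (\<Prod>i\<in>Poly_Mapping.keys m. c i ^ Poly_Mapping.lookup m i))"

definition lcoords :: "cpoly \<Rightarrow> nat \<Rightarrow> complex" where
  "lcoords l i = Poly_Mapping.lookup l (Poly_Mapping.single i 1)"

text \<open>Rank of a quadratic form: rank of its (Hessian) symmetric 4x4 matrix.\<close>
definition idx4 :: "4 \<Rightarrow> nat" where
  "idx4 i = nat (Rep_bit0 i)"

definition qmatrix :: "cpoly \<Rightarrow> complex^4^4" where
  "qmatrix q = (\<chi> i j. const (act (Var (idx4 i) * Var (idx4 j)) q))"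

definition qrank :: "cpoly \<Rightarrow> nat" where
  "qrank q = rank (qmatrix q)"

definition qsub :: "cpoly \<Rightarrow> cpoly \<Rightarrow> cpoly" where
  "qsub q l = (THE g. g \<in> Forms 2 \<and> act g (q * q) = l * l)"

definition qinv :: "cpoly \<Rightarrow> cpoly" where
  "qinv q = (THE h. h \<in> Forms 2 \<and> (\<forall>l\<in>Forms 1. act (act l h) q = l)
                   \<and> (\<forall>g\<in>Forms 1. act (act g q) h = g))"

definition pl :: "cpoly \<Rightarrow> cpoly \<Rightarrow> cpoly" where
  "pl q l = act l (qinv q)"

end

theory Submission
  imports Defs
begin

definition cst :: "complex \<Rightarrow> cpoly" where "cst c = Poly_Mapping.single 0 c"
definition ee :: "nat \<Rightarrow> mono" where "ee i = Poly_Mapping.single i 1"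
definition Mm :: "mono \<Rightarrow> mono \<Rightarrow> complex \<Rightarrow> cpoly" where
  "Mm b a v = (if mdvd b a then Poly_Mapping.single (a - b) (v * dcoef a b) else 0)"

lemma lookup_mdiff: "Poly_Mapping.lookup (a - b) i = Poly_Mapping.lookup a i - Poly_Mapping.lookup (b::mono) i"
  by (simp add: minus_poly_mapping.rep_eq)

lemma lookup_cst_mult: "Poly_Mapping.lookup (cst c * p) k = c * Poly_Mapping.lookup p k"
proof -
  have "cst c * p = Poly_Mapping.map ((*) c) p" by (simp add: cst_def mult_map_scale_conv_mult)
  then show ?thesis by (simp add: map.rep_eq when_def)
qed

lemma keys_cst_mult: "Poly_Mapping.keys (cst c * p) \<subseteq> Poly_Mapping.keys p"
  by (auto simp: in_keys_iff lookup_cst_mult)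

lemma cst_mult_single: "cst c * Poly_Mapping.single a v = Poly_Mapping.single a (c * v)"
  by (simp add: cst_def mult_single)

lemma cst_add: "cst (a + b) = cst a + cst b" by (simp add: cst_def single_add)
lemma cst_mult: "cst (a * b) = cst a * cst b" by (simp add: cst_def mult_single)
lemma cst_0[simp]: "cst 0 = 0" by (simp add: cst_def)
lemma cst_1[simp]: "cst 1 = 1" by (simp add: cst_def)
lemma cst_diff: "cst (a - b) = cst a - cst b" by (simp add: cst_def single_diff)
lemma cst_sum: "cst (sum f A) = (\<Sum>x\<in>A. cst (f x))"
  by (induction A rule: infinite_finite_induct) (auto simp: cst_add)
lemma const_cst[simp]: "const (cst c) = c" by (simp add: const_def cst_def)
lemma cst_inj: "cst a = cst b \<longleftrightarrow> a = b" by (metis const_cst)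

lemma Mm_scale: "Mm b a (c * v) = cst c * Mm b a v"
  by (simp add: Mm_def cst_mult_single mult.assoc)
lemma Mm_add: "Mm b a (v + w) = Mm b a v + Mm b a w"
  by (simp add: Mm_def single_add distrib_right)
lemma Mm_0[simp]: "Mm b a 0 = 0" by (simp add: Mm_def)

lemma act_expand:
  assumes "finite B" "Poly_Mapping.keys g \<subseteq> B" "finite A" "Poly_Mapping.keys f \<subseteq> A"
  shows "act g f = (\<Sum>b\<in>B. \<Sum>a\<in>A. Mm b a (Poly_Mapping.lookup g b * Poly_Mapping.lookup f a))"
proof -
  have "act g f = (\<Sum>b\<in>Poly_Mapping.keys g. \<Sum>a\<in>Poly_Mapping.keys f. Mm b a (Poly_Mapping.lookup g b * Poly_Mapping.lookup f a))"
    unfolding act_def Mm_def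
    by (rule sum.cong[OF refl], subst sum.inter_filter[symmetric]) (auto intro!: sum.cong)
  also have "\<dots> = (\<Sum>b\<in>B. \<Sum>a\<in>Poly_Mapping.keys f. Mm b a (Poly_Mapping.lookup g b * Poly_Mapping.lookup f a))"
    by (rule sum.mono_neutral_left) (use assms in \<open>auto simp: in_keys_iff\<close>)
  also have "\<dots> = (\<Sum>b\<in>B. \<Sum>a\<in>A. Mm b a (Poly_Mapping.lookup g b * Poly_Mapping.lookup f a))"
    by (rule sum.cong[OF refl], rule sum.mono_neutral_left) (use assms in \<open>auto simp: in_keys_iff\<close>)
  finally show ?thesis .
qed

lemma act_add_left: "act (g1 + g2) f = act g1 f + act g2 f"
proof -
  let ?B = "Poly_Mapping.keys g1 \<union> Poly_Mapping.keys g2"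
  have k: "Poly_Mapping.keys (g1 + g2) \<subseteq> ?B" by (rule keys_add)
  show ?thesis
    by (subst (1 2 3) act_expand[where B="?B" and A="Poly_Mapping.keys f"])
       (use k in \<open>auto simp: lookup_add distrib_right Mm_add sum.distrib\<close>)
qed

lemma act_add_right: "act g (f1 + f2) = act g f1 + act g f2"
proof -
  let ?A = "Poly_Mapping.keys f1 \<union> Poly_Mapping.keys f2"
  have k: "Poly_Mapping.keys (f1 + f2) \<subseteq> ?A" by (rule keys_add)
  show ?thesis
    by (subst (1 2 3) act_expand[where A="?A" and B="Poly_Mapping.keys g"])
       (use k in \<open>auto simp: lookup_add distrib_left Mm_add sum.distrib\<close>)
qed

lemma act_cst_left: "act (cst c * g) f = cst c * act g f"
  by (subst (1 2) act_expand[where B="Poly_Mapping.keys g" and A="Poly_Mapping.keys f"])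
     (auto simp: keys_cst_mult lookup_cst_mult mult.assoc Mm_scale sum_distrib_left)

lemma act_cst_right: "act g (cst c * f) = cst c * act g f"
proof -
  have "\<And>x y. x * (c * y) = c * (x * (y::complex))" by simp
  then show ?thesis
  by (subst (1 2) act_expand[where B="Poly_Mapping.keys g" and A="Poly_Mapping.keys f"])
     (auto simp: keys_cst_mult lookup_cst_mult Mm_scale sum_distrib_left mult.left_commute)
qed

lemma act_0_left[simp]: "act 0 f = 0" by (simp add: act_def)
lemma act_0_right[simp]: "act g 0 = 0" by (simp add: act_def)

lemma act_sum_left: "act (\<Sum>x\<in>X. G x) f = (\<Sum>x\<in>X. act (G x) f)"
  by (induction X rule: infinite_finite_induct) (auto simp: act_add_left)
lemma act_sum_right: "act g (\<Sum>x\<in>X. F x) = (\<Sum>x\<in>X. act g (F x))"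
  by (induction X rule: infinite_finite_induct) (auto simp: act_add_right)
lemma act_diff_left: "act (g1 - g2) f = act g1 f - act g2 f"
  by (metis act_add_left add_diff_cancel_right' diff_add_cancel)
lemma act_diff_right: "act g (f1 - f2) = act g f1 - act g f2"
  by (metis act_add_right add_diff_cancel_right' diff_add_cancel)

lemma act_mono: "act (Poly_Mapping.single b 1) (Poly_Mapping.single a 1) = Mm b a 1"
  by (subst act_expand[where B="{b}" and A="{a}"]) auto

lemma poly_expand: "f = (\<Sum>a\<in>Poly_Mapping.keys f. cst (Poly_Mapping.lookup f a) * Poly_Mapping.single a 1)"
  by (rule poly_mapping_eqI) (auto simp: lookup_sum cst_mult_single lookup_single when_def in_keys_iff)

definition linop :: "(cpoly \<Rightarrow> cpoly) \<Rightarrow> bool" where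
  "linop F \<longleftrightarrow> (\<forall>f g. F (f + g) = F f + F g) \<and> (\<forall>c f. F (cst c * f) = cst c * F f)"

lemma linop_sum: "linop F \<Longrightarrow> F (\<Sum>x\<in>X. G x) = (\<Sum>x\<in>X. F (G x))"
proof (induction X rule: infinite_finite_induct)
  case (infinite A)
  then show ?case using linop_def by (metis cst_0 mult_zero_left sum.infinite)
next
  case empty
  then show ?case using linop_def by (metis cst_0 mult_zero_left sum.empty)
next
  case (insert x F)
  then show ?case by (simp add: linop_def)
qed

lemma linop_ext:
  assumes "linop F" "linop G" "\<And>a. F (Poly_Mapping.single a 1) = G (Poly_Mapping.single a 1)"
  shows "F f = G f"
proof -
  have "F f = F (\<Sum>a\<in>Poly_Mapping.keys f. cst (Poly_Mapping.lookup f a) * Poly_Mapping.single a 1)"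
    by (subst poly_expand) simp
  also have "\<dots> = (\<Sum>a\<in>Poly_Mapping.keys f. cst (Poly_Mapping.lookup f a) * F (Poly_Mapping.single a 1))"
    using assms(1) by (simp add: linop_sum linop_def)
  also have "\<dots> = (\<Sum>a\<in>Poly_Mapping.keys f. cst (Poly_Mapping.lookup f a) * G (Poly_Mapping.single a 1))"
    using assms(3) by simp
  also have "\<dots> = G (\<Sum>a\<in>Poly_Mapping.keys f. cst (Poly_Mapping.lookup f a) * Poly_Mapping.single a 1)"
    using assms(2) by (simp add: linop_sum linop_def)
  finally show ?thesis by (subst poly_expand) simp
qed

lemma linop_act_left: "linop (\<lambda>g. act g f)" by (simp add: linop_def act_add_left act_cst_left)
lemma linop_act_right: "linop (\<lambda>f. act g f)" by (simp add: linop_def act_add_right act_cst_right)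

lemma dcoef_superset:
  assumes "finite S" "Poly_Mapping.keys a \<subseteq> S"
  shows "dcoef a b = (\<Prod>i\<in>S. of_nat (fact (Poly_Mapping.lookup a i)) / of_nat (fact (Poly_Mapping.lookup a i - Poly_Mapping.lookup b i)))"
  unfolding dcoef_def
  by (rule prod.mono_neutral_left) (use assms in \<open>auto simp: in_keys_iff\<close>)

lemma keys_mdiff: "Poly_Mapping.keys (a - b) \<subseteq> Poly_Mapping.keys (a::mono)"
  by (auto simp: in_keys_iff lookup_mdiff)

lemma mono_comp: "Mm (b1 + b2) a 1 = (if mdvd b2 a then cst (dcoef a b2) * Mm b1 (a - b2) 1 else 0)"
proof -
  have dv: "mdvd (b1 + b2) a \<longleftrightarrow> mdvd b2 a \<and> mdvd b1 (a - b2)"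
    unfolding mdvd_def by (auto simp: lookup_add lookup_mdiff) (metis le_diff_conv2 add.commute le_add2 order_trans le_diff_conv)+
  have df: "a - (b1 + b2) = a - b2 - b1"
    by (rule poly_mapping_eqI) (simp add: lookup_mdiff lookup_add)
  have dc: "dcoef a (b1 + b2) = dcoef a b2 * dcoef (a - b2) b1" if "mdvd (b1 + b2) a"
  proof -
    let ?S = "Poly_Mapping.keys a"
    have "dcoef a (b1 + b2) = (\<Prod>i\<in>?S. of_nat (fact (Poly_Mapping.lookup a i)) / of_nat (fact (Poly_Mapping.lookup a i - Poly_Mapping.lookup (b1+b2) i)))"
      by (rule dcoef_superset) auto
    also have "\<dots> = (\<Prod>i\<in>?S. (of_nat (fact (Poly_Mapping.lookup a i)) / of_nat (fact (Poly_Mapping.lookup a i - Poly_Mapping.lookup b2 i))) *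
        (of_nat (fact (Poly_Mapping.lookup (a - b2) i)) / of_nat (fact (Poly_Mapping.lookup (a - b2) i - Poly_Mapping.lookup b1 i))))"
      by (rule prod.cong) (auto simp: lookup_add lookup_mdiff diff_diff_add add.commute)
    also have "\<dots> = dcoef a b2 * dcoef (a - b2) b1"
      by (subst prod.distrib) (simp add: dcoef_superset[of ?S] keys_mdiff)
    finally show ?thesis .
  qed
  show ?thesis
    by (auto simp: Mm_def dv df dc cst_mult_single mult.commute)
qed

lemma act_mult_left: "act (g1 * g2) f = act g1 (act g2 f)"
proof -
  have m1: "act (Poly_Mapping.single b1 1 * Poly_Mapping.single b2 1) (Poly_Mapping.single a 1) =
      act (Poly_Mapping.single b1 1) (act (Poly_Mapping.single b2 1) (Poly_Mapping.single a 1))" for b1 b2 a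
  proof -
    have e: "Mm b2 a 1 = (if mdvd b2 a then cst (dcoef a b2) * Poly_Mapping.single (a - b2) 1 else 0)"
      by (simp add: Mm_def cst_mult_single)
    show ?thesis
      by (simp add: mult_single act_mono mono_comp e act_cst_right)
  qed
  have m2: "act (Poly_Mapping.single b1 1 * g2) (Poly_Mapping.single a 1) =
      act (Poly_Mapping.single b1 1) (act g2 (Poly_Mapping.single a 1))" for b1 a
    by (rule linop_ext[where F="\<lambda>g2. act (Poly_Mapping.single b1 1 * g2) (Poly_Mapping.single a 1)"
          and G="\<lambda>g2. act (Poly_Mapping.single b1 1) (act g2 (Poly_Mapping.single a 1))"])
       (auto simp: linop_def m1 distrib_left act_add_left act_add_right act_cst_left act_cst_right mult.left_commute)
  have m3: "act (g1 * g2) (Poly_Mapping.single a 1) = act g1 (act g2 (Poly_Mapping.single a 1))" for a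
    by (rule linop_ext[where F="\<lambda>g1. act (g1 * g2) (Poly_Mapping.single a 1)"
          and G="\<lambda>g1. act g1 (act g2 (Poly_Mapping.single a 1))"])
       (auto simp: linop_def m2 distrib_right act_add_left act_cst_left mult.assoc)
  show ?thesis
    by (rule linop_ext[where F="\<lambda>f. act (g1 * g2) f" and G="\<lambda>f. act g1 (act g2 f)"])
       (auto simp: linop_def m3 act_add_right act_cst_right)
qed

lemma act_comm: "act g1 (act g2 f) = act g2 (act g1 f)"
  by (metis act_mult_left mult.commute)

abbreviation D :: "nat \<Rightarrow> cpoly \<Rightarrow> cpoly" where "D i f \<equiv> act (Var i) f"

lemma lookup_ee: "Poly_Mapping.lookup (ee i) k = (if k = i then 1 else 0)"
  by (simp add: ee_def lookup_single when_def)

lemma D_mono: "D i (Poly_Mapping.single a 1) = Poly_Mapping.single (a - ee i) (of_nat (Poly_Mapping.lookup a i))"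
proof -
  have v: "Var i = Poly_Mapping.single (ee i) 1" by (simp add: Var_def ee_def)
  show ?thesis
  proof (cases "Poly_Mapping.lookup a i = 0")
    case True
    then have "\<not> mdvd (ee i) a" by (auto simp: mdvd_def lookup_ee split: if_splits)
    then show ?thesis using True by (simp add: v act_mono Mm_def)
  next
    case False
    then have dv: "mdvd (ee i) a" by (auto simp: mdvd_def lookup_ee)
    have ik: "i \<in> Poly_Mapping.keys a" using False by (simp add: in_keys_iff)
    have "dcoef a (ee i) = (\<Prod>k\<in>Poly_Mapping.keys a. if k = i then of_nat (Poly_Mapping.lookup a i) else 1)"
      unfolding dcoef_def
    proof (rule prod.cong[OF refl])
      fix k assume "k \<in> Poly_Mapping.keys a"
      show "of_nat (fact (Poly_Mapping.lookup a k)) / of_nat (fact (Poly_Mapping.lookup a k - Poly_Mapping.lookup (ee i) k)) =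
         (if k = i then of_nat (Poly_Mapping.lookup a i) else (1::complex))"
        using False by (auto simp: lookup_ee fact_reduce[of "Poly_Mapping.lookup a i"])
    qed
    also have "\<dots> = of_nat (Poly_Mapping.lookup a i)" using ik by simp
    finally show ?thesis using dv by (simp add: v act_mono Mm_def)
  qed
qed

lemma D_prod_mono: "D i (Poly_Mapping.single a 1 * Poly_Mapping.single c 1) =
   D i (Poly_Mapping.single a 1) * Poly_Mapping.single c 1 + Poly_Mapping.single a 1 * D i (Poly_Mapping.single c 1)"
proof -
  have h: "Poly_Mapping.single (x - ee i + y) (of_nat (Poly_Mapping.lookup x i)) =
      Poly_Mapping.single (x + y - ee i) (of_nat (Poly_Mapping.lookup x i) :: complex)" for x y :: mono
  proof (cases "Poly_Mapping.lookup x i = 0")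
    case False
    have "x - ee i + y = x + y - ee i"
      by (rule poly_mapping_eqI) (use False in \<open>auto simp: lookup_mdiff lookup_add lookup_ee\<close>)
    then show ?thesis by simp
  qed simp
  have "D i (Poly_Mapping.single a 1 * Poly_Mapping.single c 1) = Poly_Mapping.single (a + c - ee i) (of_nat (Poly_Mapping.lookup a i) + of_nat (Poly_Mapping.lookup c i))"
    by (simp add: mult_single D_mono lookup_add)
  also have "\<dots> = Poly_Mapping.single (a - ee i + c) (of_nat (Poly_Mapping.lookup a i)) + Poly_Mapping.single (a + (c - ee i)) (of_nat (Poly_Mapping.lookup c i))"
  proof -
    have "a + (c - ee i) = c - ee i + a" by (rule add.commute)
    then show ?thesis by (simp only: h[of a c] h[of c a] single_add add.commute[of c a])
  qed
  also have "\<dots> = D i (Poly_Mapping.single a 1) * Poly_Mapping.single c 1 + Poly_Mapping.single a 1 * D i (Poly_Mapping.single c 1)"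
    by (simp add: mult_single D_mono)
  finally show ?thesis .
qed

lemma D_prod: "D i (f * g) = D i f * g + f * D i g"
proof -
  have m2: "D i (Poly_Mapping.single a 1 * g) = D i (Poly_Mapping.single a 1) * g + Poly_Mapping.single a 1 * D i g" for a
    by (rule linop_ext[where F="\<lambda>g. D i (Poly_Mapping.single a 1 * g)"
          and G="\<lambda>g. D i (Poly_Mapping.single a 1) * g + Poly_Mapping.single a 1 * D i g"])
       (auto simp: linop_def D_prod_mono distrib_left act_add_right act_cst_right mult.left_commute)
  show ?thesis
    by (rule linop_ext[where F="\<lambda>f. D i (f * g)" and G="\<lambda>f. D i f * g + f * D i g"])
       (simp_all add: linop_def m2 distrib_right distrib_left act_add_right act_cst_right mult.assoc)
qed

lemma D_Var: "D i (Var j) = (if i = j then 1 else 0)"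
proof -
  have "Var j = Poly_Mapping.single (ee j) 1" by (simp add: Var_def ee_def)
  then show ?thesis by (simp add: D_mono lookup_ee ee_def lookup_single when_def)
qed

lemma one_single: "(1::cpoly) = Poly_Mapping.single 0 1" by simp

lemma act_one_left: "act 1 f = f"
proof -
  have dc: "dcoef a 0 = 1" for a by (simp add: dcoef_def)
  have "act 1 (Poly_Mapping.single a 1) = Poly_Mapping.single a 1" for a
    by (simp only: one_single act_mono) (simp add: Mm_def mdvd_def dc)
  moreover have "linop (act 1)" using linop_act_right[of 1] by simp
  moreover have "linop (\<lambda>f. f)" by (simp add: linop_def)
  ultimately show ?thesis
    using linop_ext[where F="act 1" and G="\<lambda>f. f"] by blast
qed

lemma act_cst_left': "act (cst c) f = cst c * f"
  by (metis act_cst_left act_one_left mult.right_neutral)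

lemma D_cst: "D i (cst c) = 0"
proof -
  have z: "D i (Poly_Mapping.single 0 1) = 0" by (subst D_mono) simp
  have "D i (cst c) = cst c * D i (Poly_Mapping.single 0 1)"
    by (metis act_cst_right mult.right_neutral one_single)
  then show ?thesis by (simp only: z mult_zero_right)
qed

lemma D_one: "D i 1 = 0" using D_cst[of i 1] by simp

lemma mdeg_superset: "finite S \<Longrightarrow> Poly_Mapping.keys m \<subseteq> S \<Longrightarrow> mdeg m = (\<Sum>k\<in>S. Poly_Mapping.lookup m k)"
  unfolding mdeg_def by (rule sum.mono_neutral_left) (auto simp: in_keys_iff)

lemma mdeg_add: "mdeg (x + y) = mdeg x + mdeg y"
proof -
  let ?S = "Poly_Mapping.keys x \<union> Poly_Mapping.keys y"
  have "Poly_Mapping.keys (x + y) \<subseteq> ?S" by (rule keys_add)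
  then show ?thesis
    by (simp add: mdeg_superset[of ?S] lookup_add sum.distrib)
qed

lemma mdeg_ee: "mdeg (ee i) = 1" by (simp add: mdeg_def ee_def)

lemma mdeg_0_iff: "mdeg m = 0 \<longleftrightarrow> m = 0"
proof
  assume "mdeg m = 0"
  then have "\<forall>k\<in>Poly_Mapping.keys m. Poly_Mapping.lookup m k = 0" unfolding mdeg_def by simp
  then show "m = 0" by (metis in_keys_iff lookup_zero poly_mapping_eqI)
qed (simp add: mdeg_def)

lemma Forms_iff: "f \<in> Forms d \<longleftrightarrow> (\<forall>m. Poly_Mapping.lookup f m \<noteq> 0 \<longrightarrow> Poly_Mapping.keys m \<subseteq> {0..<4} \<and> mdeg m = d)"
  by (auto simp: Forms_def in_keys_iff)

lemma Forms_0[simp]: "0 \<in> Forms d" by (simp add: Forms_def)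
lemma Forms_add: "f \<in> Forms d \<Longrightarrow> g \<in> Forms d \<Longrightarrow> f + g \<in> Forms d"
proof -
  assume f: "f \<in> Forms d" and g: "g \<in> Forms d"
  have "Poly_Mapping.keys m \<subseteq> {0..<4} \<and> mdeg m = d" if m: "m \<in> Poly_Mapping.keys (f + g)" for m
  proof -
    have "m \<in> Poly_Mapping.keys f \<or> m \<in> Poly_Mapping.keys g" using m keys_add[of f g] by auto
    then show ?thesis using f g unfolding Forms_def by auto
  qed
  then show ?thesis by (simp add: Forms_def)
qed
lemma Forms_cst_mult: "f \<in> Forms d \<Longrightarrow> cst c * f \<in> Forms d"
  by (auto simp: Forms_iff lookup_cst_mult)
lemma Forms_uminus: "f \<in> Forms d \<Longrightarrow> - f \<in> Forms d"
  by (auto simp: Forms_iff)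
lemma Forms_diff: "f \<in> Forms d \<Longrightarrow> g \<in> Forms d \<Longrightarrow> f - g \<in> Forms d"
  by (metis Forms_add Forms_uminus diff_conv_add_uminus)
lemma Forms_sum: "(\<And>x. x \<in> X \<Longrightarrow> F x \<in> Forms d) \<Longrightarrow> (\<Sum>x\<in>X. F x) \<in> Forms d"
  by (induction X rule: infinite_finite_induct) (auto simp: Forms_add)
lemma Forms_single: "Poly_Mapping.keys m \<subseteq> {0..<4} \<Longrightarrow> mdeg m = d \<Longrightarrow> Poly_Mapping.single m c \<in> Forms d"
  by (auto simp: Forms_iff lookup_single when_def)
lemma Forms_cst: "cst c \<in> Forms 0"
  unfolding cst_def by (rule Forms_single) (auto simp: mdeg_def)
lemma Forms_Var: "i < 4 \<Longrightarrow> Var i \<in> Forms 1"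
  unfolding Var_def by (rule Forms_single) (auto simp: mdeg_def)

lemma Forms_mult:
  assumes "f \<in> Forms d" "g \<in> Forms e" shows "f * g \<in> Forms (d + e)"
proof -
  have f: "\<forall>m\<in>Poly_Mapping.keys f. Poly_Mapping.keys m \<subseteq> {0..<4} \<and> mdeg m = d"
    using assms(1) by (simp add: Forms_def)
  have g: "\<forall>m\<in>Poly_Mapping.keys g. Poly_Mapping.keys m \<subseteq> {0..<4} \<and> mdeg m = e"
    using assms(2) by (simp add: Forms_def)
  have "Poly_Mapping.keys m \<subseteq> {0..<4} \<and> mdeg m = d + e" if m: "m \<in> Poly_Mapping.keys (f * g)" for m
  proof -
    have "m \<in> {a + b |a b. a \<in> Poly_Mapping.keys f \<and> b \<in> Poly_Mapping.keys g}"
      by (rule subsetD[OF keys_mult m])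
    then obtain a b where ab: "m = a + b" "a \<in> Poly_Mapping.keys f" "b \<in> Poly_Mapping.keys g"
      by blast
    have k: "Poly_Mapping.keys m \<subseteq> Poly_Mapping.keys a \<union> Poly_Mapping.keys b"
      using ab(1) keys_add[of a b] by simp
    have fa: "Poly_Mapping.keys a \<subseteq> {0..<4} \<and> mdeg a = d" by (rule f[rule_format, OF ab(2)])
    have gb: "Poly_Mapping.keys b \<subseteq> {0..<4} \<and> mdeg b = e" by (rule g[rule_format, OF ab(3)])
    have "Poly_Mapping.keys m \<subseteq> {0..<4}" using k fa gb by (meson Un_least order_trans)
    moreover have "mdeg m = d + e" using ab(1) mdeg_add[of a b] fa gb by simp
    ultimately show ?thesis by simp
  qed
  then show ?thesis by (simp add: Forms_def)
qed

lemma D_mono_Forms: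
  assumes "Poly_Mapping.keys a \<subseteq> {0..<4}" "mdeg a = Suc d"
  shows "D i (Poly_Mapping.single a 1) \<in> Forms d"
proof (cases "Poly_Mapping.lookup a i = 0")
  case True then show ?thesis by (simp add: D_mono)
next
  case False
  have eq: "a = (a - ee i) + ee i"
    by (rule poly_mapping_eqI) (use False in \<open>auto simp: lookup_mdiff lookup_add lookup_ee\<close>)
  have "mdeg (a - ee i) = d" using assms(2) mdeg_add[of "a - ee i" "ee i"] eq by (simp add: mdeg_ee)
  then show ?thesis unfolding D_mono
    by (intro Forms_single) (use keys_mdiff[of a "ee i"] assms(1) in \<open>simp add: subset_iff\<close>)
qed

lemma Forms_D: "f \<in> Forms (Suc d) \<Longrightarrow> D i f \<in> Forms d"
proof -
  assume f: "f \<in> Forms (Suc d)"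
  have "D i f = (\<Sum>a\<in>Poly_Mapping.keys f. cst (Poly_Mapping.lookup f a) * D i (Poly_Mapping.single a 1))"
    by (subst poly_expand) (simp add: act_sum_right act_cst_right)
  also have "\<dots> \<in> Forms d"
    using f by (intro Forms_sum Forms_cst_mult D_mono_Forms) (auto simp: Forms_def)
  finally show ?thesis .
qed

lemma Forms0_cst: "f \<in> Forms 0 \<Longrightarrow> f = cst (const f)"
  by (rule poly_mapping_eqI) (auto simp: Forms_iff cst_def const_def lookup_single when_def mdeg_0_iff)

lemma Var_D_mono: "Var i * D i (Poly_Mapping.single a 1) = cst (of_nat (Poly_Mapping.lookup a i)) * Poly_Mapping.single a 1"
proof (cases "Poly_Mapping.lookup a i = 0")
  case True then show ?thesis by (simp add: D_mono)
next
  case False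
  have eq: "ee i + (a - ee i) = a"
    by (rule poly_mapping_eqI) (use False in \<open>auto simp: lookup_mdiff lookup_add lookup_ee\<close>)
  have v: "Var i = Poly_Mapping.single (ee i) 1" by (simp add: Var_def ee_def)
  have "Var i * D i (Poly_Mapping.single a 1) = Poly_Mapping.single a (1 * of_nat (Poly_Mapping.lookup a i))"
    by (simp only: D_mono) (simp only: v mult_single eq)
  then show ?thesis by (simp add: cst_mult_single)
qed

lemma euler:
  assumes "f \<in> Forms d"
  shows "(\<Sum>i<4. Var i * D i f) = cst (of_nat d) * f"
proof -
  have "(\<Sum>i<4. Var i * D i f) = (\<Sum>i<4. \<Sum>a\<in>Poly_Mapping.keys f. cst (Poly_Mapping.lookup f a) * (Var i * D i (Poly_Mapping.single a 1)))"
    by (subst (1) poly_expand) (simp add: act_sum_right act_cst_right sum_distrib_left mult.left_commute)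
  also have "\<dots> = (\<Sum>a\<in>Poly_Mapping.keys f. cst (Poly_Mapping.lookup f a) * (cst (\<Sum>i<4. of_nat (Poly_Mapping.lookup a i)) * Poly_Mapping.single a 1))"
    by (subst sum.swap) (simp add: Var_D_mono cst_sum sum_distrib_left sum_distrib_right)
  also have "\<dots> = (\<Sum>a\<in>Poly_Mapping.keys f. cst (of_nat d) * (cst (Poly_Mapping.lookup f a) * Poly_Mapping.single a 1))"
  proof (rule sum.cong[OF refl])
    fix a assume "a \<in> Poly_Mapping.keys f"
    then have "Poly_Mapping.keys a \<subseteq> {0..<4}" "mdeg a = d" using assms by (auto simp: Forms_def)
    then have "(\<Sum>i<4. Poly_Mapping.lookup a i) = d" by (simp add: mdeg_superset[of "{0..<4}"] lessThan_atLeast0)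
    then have "(\<Sum>i<4. (of_nat (Poly_Mapping.lookup a i) :: complex)) = of_nat d" by (metis of_nat_sum)
    then show "cst (Poly_Mapping.lookup f a) * (cst (\<Sum>i<4. of_nat (Poly_Mapping.lookup a i)) * Poly_Mapping.single a 1) =
      cst (of_nat d) * (cst (Poly_Mapping.lookup f a) * Poly_Mapping.single a 1)" by (simp add: mult.left_commute)
  qed
  also have "\<dots> = cst (of_nat d) * f" by (subst (2) poly_expand) (simp add: sum_distrib_left)
  finally show ?thesis .
qed

definition lin :: "(nat \<Rightarrow> complex) \<Rightarrow> cpoly" where
  "lin v = (\<Sum>i<4. cst (v i) * Var i)"

definition dl :: "nat \<Rightarrow> nat \<Rightarrow> complex" where "dl i k = (if i = k then 1 else 0)"

lemma lin_cong: "(\<And>i. i < 4 \<Longrightarrow> v i = w i) \<Longrightarrow> lin v = lin w"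
  unfolding lin_def by (rule sum.cong) auto

lemma lin_Forms: "lin v \<in> Forms 1"
  unfolding lin_def by (intro Forms_sum Forms_cst_mult Forms_Var) auto

lemma sum4_delta: "(i::nat) < 4 \<Longrightarrow> (\<Sum>k<4. (if i = k then x k else 0)) = (x i :: 'a::comm_monoid_add)"
  by (simp add: sum.delta)
lemma sum4_delta': "(i::nat) < 4 \<Longrightarrow> (\<Sum>k<4. (if k = i then x k else 0)) = (x i :: 'a::comm_monoid_add)"
  by (simp add: sum.delta')

lemma D_lin: "i < 4 \<Longrightarrow> D i (lin v) = cst (v i)"
  unfolding lin_def by (simp add: act_sum_right act_cst_right D_Var if_distrib sum4_delta cong: if_cong)

lemma act_lin: "act (lin w) f = (\<Sum>i<4. cst (w i) * D i f)"
  unfolding lin_def by (simp add: act_sum_left act_cst_left)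

lemma act_lin_lin: "act (lin w) (lin v) = cst (\<Sum>i<4. w i * v i)"
  by (simp add: act_lin D_lin cst_sum cst_mult)

lemma lin_dl: "i < 4 \<Longrightarrow> lin (dl i) = Var i"
proof -
  assume i: "i < 4"
  have "\<And>k. cst (if i = k then 1 else 0) * Var k = (if i = k then Var k else 0)" by simp
  then show ?thesis unfolding lin_def dl_def by (simp only: sum4_delta[OF i])
qed

lemma lin_add: "lin v + lin w = lin (\<lambda>i. v i + w i)"
  unfolding lin_def by (simp add: sum.distrib[symmetric] cst_add distrib_right)

lemma lin_scale: "cst c * lin v = lin (\<lambda>i. c * v i)"
  unfolding lin_def by (simp add: sum_distrib_left cst_mult mult.assoc)

lemma lin_sum: "(\<Sum>k\<in>K. cst (c k) * lin (v k)) = lin (\<lambda>i. \<Sum>k\<in>K. c k * v k i)"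
  unfolding lin_def by (simp add: sum_distrib_left cst_sum sum_distrib_right mult.assoc cst_mult) (rule sum.swap)

lemma lin_zero: "lin (\<lambda>i. 0) = 0" by (simp add: lin_def)

lemma lin_deriv: "act (lin w) (f * g) = act (lin w) f * g + f * act (lin w) g"
  by (simp add: act_lin D_prod distrib_left sum.distrib sum_distrib_left sum_distrib_right mult.assoc mult.left_commute)

lemma rep1: "f \<in> Forms 1 \<Longrightarrow> f = lin (\<lambda>i. const (D i f))"
proof -
  assume f: "f \<in> Forms 1"
  have "f = (\<Sum>i<4. Var i * D i f)" using euler[OF f] by simp
  also have "\<dots> = (\<Sum>i<4. cst (const (D i f)) * Var i)"
    by (rule sum.cong[OF refl]) (metis Forms0_cst Forms_D One_nat_def f mult.commute)
  finally show ?thesis by (simp add: lin_def)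
qed

lemma single_eq1: "Poly_Mapping.single x (1::nat) = Poly_Mapping.single j 1 \<longleftrightarrow> x = j"
proof
  assume "Poly_Mapping.single x (1::nat) = Poly_Mapping.single j 1"
  then have "Poly_Mapping.lookup (Poly_Mapping.single x (1::nat)) x = Poly_Mapping.lookup (Poly_Mapping.single j 1) x" by simp
  then show "x = j" by (simp add: lookup_single when_def split: if_splits)
qed simp

lemma lookup_Var: "Poly_Mapping.lookup (Var x) (Poly_Mapping.single j 1) = (if x = j then 1 else 0)"
  unfolding Var_def using single_eq1[of x j] by (simp add: lookup_single when_def)

lemma lookup_lin: "j < 4 \<Longrightarrow> Poly_Mapping.lookup (lin v) (Poly_Mapping.single j 1) = v j"
proof -
  assume j: "j < 4"
  have "Poly_Mapping.lookup (lin v) (Poly_Mapping.single j 1) = (\<Sum>i<4. v i * (if i = j then 1 else 0))"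
    unfolding lin_def by (simp only: lookup_sum lookup_cst_mult lookup_Var)
  also have "\<dots> = (\<Sum>i<4. if i = j then v i else 0)" by (rule sum.cong) auto
  also have "\<dots> = v j" using j by (simp add: sum4_delta')
  finally show ?thesis .
qed

lemma rep1_lcoords: "f \<in> Forms 1 \<Longrightarrow> f = lin (lcoords f)"
proof -
  assume f: "f \<in> Forms 1"
  then have e: "f = lin (\<lambda>i. const (D i f))" by (rule rep1)
  have "lcoords f i = const (D i f)" if "i < 4" for i
    using that lookup_lin[OF that, of "\<lambda>i. const (D i f)"] e by (simp add: lcoords_def)
  then show ?thesis by (subst e) (rule lin_cong, simp)
qed

lemma rep2: "f \<in> Forms 2 \<Longrightarrow> cst 2 * f = (\<Sum>i<4. Var i * lin (\<lambda>j. const (D j (D i f))))"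
proof -
  assume f: "f \<in> Forms 2"
  have "cst 2 * f = (\<Sum>i<4. Var i * D i f)" using euler[OF f] by simp
  also have "\<dots> = (\<Sum>i<4. Var i * lin (\<lambda>j. const (D j (D i f))))"
    by (rule sum.cong[OF refl]) (metis Forms_D numeral_2_eq_2 One_nat_def f rep1)
  finally show ?thesis .
qed

definition qa :: "cpoly \<Rightarrow> nat \<Rightarrow> nat \<Rightarrow> complex" where "qa q i j = const (D i (D j q))"
definition mv :: "(nat \<Rightarrow> complex) \<Rightarrow> (nat \<Rightarrow> nat \<Rightarrow> complex) \<Rightarrow> nat \<Rightarrow> complex" where
  "mv w M = (\<lambda>k. \<Sum>i<4. w i * M i k)"

lemma mv_mv:
  assumes "\<And>i. i < 4 \<Longrightarrow> (\<Sum>j<4. M i j * N j k) = dl i k" "k < 4"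
  shows "mv (mv w M) N k = w k"
proof -
  have "mv (mv w M) N k = (\<Sum>j<4. \<Sum>i<4. w i * M i j * N j k)"
    by (simp add: mv_def sum_distrib_right)
  also have "\<dots> = (\<Sum>i<4. w i * (\<Sum>j<4. M i j * N j k))"
    by (subst sum.swap) (simp add: sum_distrib_left mult.assoc)
  also have "\<dots> = (\<Sum>i<4. if i = k then w i else 0)"
    by (rule sum.cong[OF refl]) (simp add: assms(1) dl_def)
  also have "\<dots> = w k" using assms(2) by (simp add: sum4_delta')
  finally show ?thesis .
qed

lemma cst2: "cst 2 = 2" by (simp add: cst_def)
lemma cst_numeral: "cst (numeral n) = numeral n" by (simp add: cst_def)
lemma cst_half2: "cst (1/2) * (cst 2 * x) = x"
  by (simp add: mult.assoc[symmetric] cst_mult[symmetric])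

definition mon :: "(nat \<Rightarrow> complex) \<Rightarrow> mono \<Rightarrow> complex" where
  "mon x m = (\<Prod>i\<in>Poly_Mapping.keys m. x i ^ Poly_Mapping.lookup m i)"

lemma mon_superset: "finite S \<Longrightarrow> Poly_Mapping.keys m \<subseteq> S \<Longrightarrow> mon x m = (\<Prod>i\<in>S. x i ^ Poly_Mapping.lookup m i)"
  unfolding mon_def by (rule prod.mono_neutral_left) (auto simp: in_keys_iff)

lemma peval_superset: "finite S \<Longrightarrow> Poly_Mapping.keys f \<subseteq> S \<Longrightarrow> peval f x = (\<Sum>m\<in>S. Poly_Mapping.lookup f m * mon x m)"
  unfolding peval_def mon_def by (rule sum.mono_neutral_left) (auto simp: in_keys_iff)

lemma peval_add: "peval (f + g) x = peval f x + peval g x"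
proof -
  let ?S = "Poly_Mapping.keys f \<union> Poly_Mapping.keys g"
  have "Poly_Mapping.keys (f + g) \<subseteq> ?S" by (rule keys_add)
  then show ?thesis
    by (simp add: peval_superset[of ?S] lookup_add distrib_right sum.distrib)
qed

lemma peval_cst_mult: "peval (cst c * f) x = c * peval f x"
  by (simp add: peval_superset[of "Poly_Mapping.keys f"] keys_cst_mult lookup_cst_mult sum_distrib_left mult.assoc)

lemma peval_0[simp]: "peval 0 x = 0" by (simp add: peval_def)

lemma peval_sum: "peval (\<Sum>k\<in>K. F k) x = (\<Sum>k\<in>K. peval (F k) x)"
  by (induction K rule: infinite_finite_induct) (auto simp: peval_add)

lemma peval_VV: "peval (Var j * Var k) x = x j * x k"
proof -
  have e: "Var j * Var k = Poly_Mapping.single (ee j + ee k) 1" by (simp add: Var_def ee_def mult_single)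
  have k: "Poly_Mapping.keys (ee j + ee k) \<subseteq> {j, k}"
    using keys_add[of "ee j" "ee k"] by (auto simp: ee_def)
  have "peval (Var j * Var k) x = mon x (ee j + ee k)"
    unfolding e by (simp add: peval_def mon_def)
  also have "\<dots> = (\<Prod>i\<in>{j,k}. x i ^ Poly_Mapping.lookup (ee j + ee k) i)"
    by (rule mon_superset[OF _ k]) simp
  also have "\<dots> = x j * x k"
    by (cases "j = k") (auto simp: lookup_add lookup_ee power2_eq_square)
  finally show ?thesis .
qed

lemma qa_sym: "qa q i j = qa q j i"
  unfolding qa_def by (simp add: act_comm)

locale qs =
  fixes q :: cpoly and b :: "nat \<Rightarrow> nat \<Rightarrow> complex"
  assumes q2: "q \<in> Forms 2"
    and inv1: "\<And>i j. i < 4 \<Longrightarrow> j < 4 \<Longrightarrow> (\<Sum>k<4. qa q i k * b k j) = dl i j"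
    and inv2: "\<And>i j. i < 4 \<Longrightarrow> j < 4 \<Longrightarrow> (\<Sum>k<4. b i k * qa q k j) = dl i j"
    and bsym: "\<And>i j. b i j = b j i"
begin

lemma asym: "qa q i j = qa q j i"
  unfolding qa_def by (simp add: act_comm)

lemma Dq: "D i q = lin (qa q i)"
proof -
  have "D i q \<in> Forms 1" using q2 Forms_D[of q 1 i] by (simp add: numeral_2_eq_2)
  then have "D i q = lin (\<lambda>j. const (D j (D i q)))" by (rule rep1)
  also have "\<dots> = lin (qa q i)" by (simp add: qa_def[symmetric] asym[of _ i])
  finally show ?thesis .
qed

lemma act_lin_q: "act (lin w) q = lin (mv w (qa q))"
  by (simp add: act_lin Dq lin_sum mv_def)

lemma mv_b_a: "k < 4 \<Longrightarrow> mv (mv w b) (qa q) k = w k"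
  by (rule mv_mv) (auto simp: inv2)
lemma mv_a_b: "k < 4 \<Longrightarrow> mv (mv w (qa q)) b k = w k"
  by (rule mv_mv) (auto simp: inv1)

lemma lin_mv_b_a: "lin (mv (mv w b) (qa q)) = lin w"
  by (rule lin_cong) (simp add: mv_b_a)
lemma lin_mv_a_b: "lin (mv (mv w (qa q)) b) = lin w"
  by (rule lin_cong) (simp add: mv_a_b)

definition h0 :: cpoly where "h0 = (\<Sum>j<4. Var j * lin (b j))"

lemma h0_Forms: "h0 \<in> Forms 2"
  unfolding h0_def using Forms_mult[OF Forms_Var lin_Forms]
  by (intro Forms_sum) (simp add: numeral_2_eq_2)

lemma D_h0: "i < 4 \<Longrightarrow> D i h0 = cst 2 * lin (b i)"
proof -
  assume i: "i < 4"
  have "D i h0 = (\<Sum>j<4. (if i = j then 1 else 0) * lin (b j)) + (\<Sum>j<4. Var j * cst (b j i))"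
    unfolding h0_def by (simp add: act_sum_right D_prod D_Var D_lin i sum.distrib)
  also have "\<dots> = (\<Sum>j<4. (if i = j then lin (b j) else 0)) + (\<Sum>j<4. cst (b i j) * Var j)"
    by (intro arg_cong2[where f="(+)"] sum.cong) (auto simp: bsym[of _ i] mult.commute)
  also have "\<dots> = lin (b i) + lin (b i)"
    using i by (simp add: sum4_delta lin_def)
  also have "\<dots> = cst 2 * lin (b i)" by (simp add: cst2)
  finally show ?thesis .
qed

lemma act_lin_h0: "act (lin w) h0 = cst 2 * lin (mv w b)"
proof -
  have "act (lin w) h0 = cst 2 * (\<Sum>i<4. cst (w i) * lin (b i))"
    by (simp add: act_lin D_h0 sum_distrib_left mult.left_commute)
  then show ?thesis by (simp add: lin_sum mv_def)
qed

definition HH :: cpoly where "HH = cst (1/2) * h0"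

lemma HH_Forms: "HH \<in> Forms 2" unfolding HH_def by (rule Forms_cst_mult[OF h0_Forms])

lemma act_lin_HH: "act (lin w) HH = lin (mv w b)"
  unfolding HH_def by (simp add: act_cst_right act_lin_h0 cst_half2)

lemma act_h0: "act h0 f = (\<Sum>j<4. D j (act (lin (b j)) f))"
  unfolding h0_def by (simp add: act_sum_left act_mult_left)

lemma lin_b_q: "j < 4 \<Longrightarrow> act (lin (b j)) q = Var j"
proof -
  assume j: "j < 4"
  have "lin (mv (b j) (qa q)) = lin (dl j)"
    by (rule lin_cong) (simp add: mv_def inv2 j)
  then show ?thesis using j by (simp add: act_lin_q lin_dl)
qed

lemma h0_qq: "act h0 (q * q) = cst 12 * q"
proof -
  have "act h0 (q * q) = (\<Sum>j<4. D j (cst 2 * (q * Var j)))"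
    unfolding act_h0 by (rule sum.cong[OF refl]) (simp add: lin_deriv lin_b_q cst2 mult.commute)
  also have "\<dots> = (\<Sum>j<4. cst 2 * (Var j * D j q) + cst 2 * q)"
    by (rule sum.cong[OF refl]) (simp add: act_cst_right D_prod D_Var distrib_left mult.commute[of "D _ q" "Var _"])
  also have "\<dots> = cst 2 * (\<Sum>j<4. Var j * D j q) + cst 8 * q"
    by (simp add: sum.distrib sum_distrib_left cst_numeral)
  also have "\<dots> = cst 12 * q"
    by (simp add: euler[OF q2] mult.assoc[symmetric] cst_mult[symmetric] cst_add[symmetric] distrib_right[symmetric])
  finally show ?thesis .
qed

definition alpha :: "(nat \<Rightarrow> complex) \<Rightarrow> complex" where
  "alpha c = (\<Sum>k<4. mv c b k * c k)"

definition GG :: "(nat \<Rightarrow> complex) \<Rightarrow> cpoly" where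
  "GG c = cst (1/2) * (lin (mv c b) * lin (mv c b)) - cst (alpha c / 12) * h0"

lemma GG_Forms: "GG c \<in> Forms 2"
  unfolding GG_def
  by (intro Forms_diff Forms_cst_mult h0_Forms) (use Forms_mult[OF lin_Forms lin_Forms] in \<open>simp add: numeral_2_eq_2\<close>)

lemma act_lin_cst: "act (lin p) (cst x) = 0"
  by (simp add: act_lin D_cst)

lemma act_lin_num[simp]: "act (lin p) (numeral n) = 0"
  using act_lin_cst[of p "numeral n"] by (simp add: cst_numeral)
lemma D_num[simp]: "D i (numeral n) = 0"
  using D_cst[of i "numeral n"] by (simp add: cst_numeral)

lemma GG_qq: "act (GG c) (q * q) = lin c * lin c"
proof -
  let ?P = "lin (mv c b)" and ?L = "lin c"
  have Pq: "act ?P q = ?L" by (simp add: act_lin_q lin_mv_b_a)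
  have PL: "act ?P ?L = cst (alpha c)" by (simp add: act_lin_lin alpha_def)
  have "act (?P * ?P) (q * q) = act ?P (?L * q + q * ?L)"
    by (simp add: act_mult_left lin_deriv Pq)
  also have "\<dots> = cst 2 * (?L * ?L) + cst 2 * (cst (alpha c) * q)"
    by (simp add: act_add_right lin_deriv Pq PL cst2 algebra_simps)
  finally have PP: "act (?P * ?P) (q * q) = cst 2 * (?L * ?L) + cst 2 * (cst (alpha c) * q)" .
  have "act (GG c) (q * q) = cst (1/2) * (cst 2 * (?L * ?L) + cst 2 * (cst (alpha c) * q)) - cst (alpha c / 12) * (cst 12 * q)"
    unfolding GG_def by (simp add: act_diff_left act_cst_left PP h0_qq)
  also have "\<dots> = ?L * ?L + cst (alpha c) * q - cst (alpha c) * q"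
    by (simp add: distrib_left cst_half2 mult.assoc[symmetric] cst_mult[symmetric])
  finally show ?thesis by simp
qed

lemma h0_dd: "act h0 (lin d * lin d) = cst (2 * alpha d)"
proof -
  have "act h0 (lin d * lin d) = (\<Sum>j<4. cst 2 * cst ((\<Sum>i<4. b j i * d i) * d j))"
    unfolding act_h0
  proof (rule sum.cong[OF refl])
    fix j assume j: "j \<in> {..<4::nat}"
    let ?x = "\<Sum>i<4. b j i * d i"
    have "act (lin (b j)) (lin d * lin d) = cst ?x * lin d + lin d * cst ?x"
      by (simp add: lin_deriv act_lin_lin)
    then have "D j (act (lin (b j)) (lin d * lin d)) = cst ?x * cst (d j) + cst (d j) * cst ?x"
      using j by (simp add: act_add_right act_cst_right D_prod D_lin D_cst)
    then show "D j (act (lin (b j)) (lin d * lin d)) = cst 2 * cst (?x * d j)"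
      by (simp add: cst_mult cst2 mult.commute)
  qed
  also have "\<dots> = cst (2 * alpha d)"
  proof -
    have "(\<Sum>j<4. (\<Sum>i<4. b j i * d i) * d j) = alpha d"
      unfolding alpha_def mv_def by (rule sum.cong[OF refl]) (simp add: bsym mult.commute)
    then show ?thesis by (simp add: sum_distrib_left[symmetric] cst_sum[symmetric] cst_mult[symmetric])
  qed
  finally show ?thesis .
qed

lemma PP_dd: "act (lin p * lin p) (lin d * lin d) = cst (2 * (\<Sum>i<4. p i * d i)^2)"
proof -
  let ?m = "\<Sum>i<4. p i * d i"
  have "act (lin p) (lin d * lin d) = cst ?m * lin d + lin d * cst ?m"
    by (simp add: lin_deriv act_lin_lin)
  then have "act (lin p * lin p) (lin d * lin d) = cst ?m * cst ?m + cst ?m * cst ?m"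
    by (simp add: act_mult_left act_add_right act_cst_right lin_deriv act_lin_lin act_lin_cst)
  then show ?thesis by (simp add: cst_mult[symmetric] cst_add[symmetric] power2_eq_square)
qed

lemma GG_dd: "act (GG c) (lin d * lin d) = cst ((\<Sum>i<4. mv c b i * d i)^2 - alpha c * alpha d / 6)"
  unfolding GG_def
  by (simp add: act_diff_left act_cst_left PP_dd h0_dd cst_mult[symmetric] cst_diff[symmetric])

lemma act_lin_Var: "i < 4 \<Longrightarrow> act (lin w) (Var i) = cst (w i)"
proof -
  assume i: "i < 4"
  have "act (lin w) (Var i) = act (lin w) (lin (dl i))" using lin_dl[OF i] by simp
  also have "\<dots> = cst (\<Sum>t<4. if t = i then w t else 0)"
    by (simp add: act_lin_lin dl_def if_distrib cong: if_cong)
  finally show ?thesis using i by (simp add: sum4_delta')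
qed

lemma cst2_cancel: "cst 2 * x = 0 \<Longrightarrow> x = 0"
  by (simp add: cst2)

lemma uniq2:
  assumes k: "k \<in> Forms 2" and kq: "act k (q * q) = 0"
  shows "k = 0"
proof -
  have ku: "act k (lin u * lin u) = 0" for u
  proof -
    have "act k (lin u * lin u) = act k (act (GG u) (q * q))" by (simp add: GG_qq)
    also have "\<dots> = act (GG u) (act k (q * q))" by (rule act_comm)
    finally show ?thesis by (simp add: kq)
  qed
  have kij: "act k (Var i * Var j) = 0" if i: "i < 4" and j: "j < 4" for i j
  proof -
    have "lin (\<lambda>t. dl i t + dl j t) = Var i + Var j" using lin_add[of "dl i" "dl j"] lin_dl i j by simp
    then have "act k ((Var i + Var j) * (Var i + Var j)) = 0" using ku[of "\<lambda>t. dl i t + dl j t"] by simp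
    moreover have "(Var i + Var j) * (Var i + Var j) = Var i * Var i + Var j * Var j + cst 2 * (Var i * Var j)"
      by (simp add: cst2 algebra_simps)
    ultimately have "cst 2 * act k (Var i * Var j) = 0"
      using ku[of "dl i"] ku[of "dl j"] lin_dl i j by (simp add: act_add_right act_cst_right)
    then show ?thesis by (rule cst2_cancel)
  qed
  define K where "K r s = const (D s (D r k))" for r s
  have Ksym: "K r s = K s r" for r s unfolding K_def by (simp add: act_comm)
  have rep: "cst 2 * k = (\<Sum>r<4. Var r * lin (K r))" unfolding K_def by (rule rep2[OF k])
  have K0: "K i j = 0" if i: "i < 4" and j: "j < 4" for i j
  proof -
    have "act (cst 2 * k) (Var i * Var j) = (\<Sum>r<4. D r (cst (K r i) * Var j + Var i * cst (K r j)))"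
      unfolding rep by (simp add: act_sum_left act_mult_left lin_deriv act_lin_Var i j)
    also have "\<dots> = (\<Sum>r<4. (if r = j then cst (K r i) else 0) + (if r = i then cst (K r j) else 0))"
      by (rule sum.cong[OF refl]) (simp add: act_add_right act_cst_right D_prod D_Var D_cst)
    also have "\<dots> = cst (K j i) + cst (K i j)"
      using i j by (simp add: sum.distrib sum4_delta')
    also have "\<dots> = cst 2 * cst (K i j)" by (simp add: Ksym[of j i] cst2)
    finally have "cst 2 * cst (K i j) = 0" using kij[OF i j] by (simp add: act_cst_left)
    then have "cst (K i j) = 0" by (rule cst2_cancel)
    then show ?thesis by (metis cst_0 cst_inj)
  qed
  have "cst 2 * k = (\<Sum>r<4. Var r * lin (\<lambda>s. 0))"
    unfolding rep by (rule sum.cong[OF refl], rule arg_cong[where f="(*) _"], rule lin_cong) (simp add: K0)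
  then have "cst 2 * k = 0" by (simp add: lin_zero)
  then show ?thesis by (rule cst2_cancel)
qed

lemma qsub_eq: "qsub q (lin c) = GG c"
  unfolding qsub_def
proof (rule the_equality)
  show "GG c \<in> Forms 2 \<and> act (GG c) (q * q) = lin c * lin c" by (simp add: GG_Forms GG_qq)
next
  fix g assume g: "g \<in> Forms 2 \<and> act g (q * q) = lin c * lin c"
  have gF: "g \<in> Forms 2" and gq: "act g (q * q) = lin c * lin c" using g by simp_all
  have "g - GG c = 0"
    by (rule uniq2[OF Forms_diff[OF gF GG_Forms]]) (simp add: act_diff_left gq GG_qq)
  then show "g = GG c" by simp
qed

lemma D_HH: "i < 4 \<Longrightarrow> D i HH = lin (b i)"
proof -
  assume i: "i < 4"
  have "D i HH = lin (mv (dl i) b)" using act_lin_HH[of "dl i"] lin_dl[OF i] by simp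
  also have "\<dots> = lin (b i)"
  proof (rule lin_cong)
    fix k :: nat
    have "mv (dl i) b k = (\<Sum>t<4. if i = t then b t k else 0)"
      unfolding mv_def dl_def by (rule sum.cong) auto
    then show "mv (dl i) b k = b i k" using i by (simp add: sum4_delta)
  qed
  finally show ?thesis .
qed

lemma qinv_eq: "qinv q = HH"
  unfolding qinv_def
proof (rule the_equality)
  have P1: "act (act l HH) q = l" if l: "l \<in> Forms 1" for l
  proof -
    obtain c0 where e: "l = lin c0" using rep1[OF l] by blast
    show ?thesis unfolding e by (simp only: act_lin_HH act_lin_q lin_mv_b_a)
  qed
  have P2: "act (act g q) HH = g" if g: "g \<in> Forms 1" for g
  proof -
    obtain c0 where e: "g = lin c0" using rep1[OF g] by blast
    show ?thesis unfolding e by (simp only: act_lin_HH act_lin_q lin_mv_a_b)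
  qed
  show "HH \<in> Forms 2 \<and> (\<forall>l\<in>Forms 1. act (act l HH) q = l) \<and> (\<forall>g\<in>Forms 1. act (act g q) HH = g)"
    using HH_Forms P1 P2 by simp
next
  fix h assume h: "h \<in> Forms 2 \<and> (\<forall>l\<in>Forms 1. act (act l h) q = l) \<and> (\<forall>g\<in>Forms 1. act (act g q) h = g)"
  have Dh: "D i h = D i HH" if i: "i < 4" for i
  proof -
    have "act (act (lin (b i)) q) h = lin (b i)" using bspec[OF h[THEN conjunct2, THEN conjunct2] lin_Forms[of "b i"]] .
    then show ?thesis using lin_b_q[OF i] D_HH[OF i] by simp
  qed
  have h2: "h \<in> Forms 2" using h[THEN conjunct1] .
  have "cst 2 * h = (\<Sum>i<4. Var i * D i h)" using euler[OF h2] by simp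
  also have "\<dots> = (\<Sum>i<4. Var i * D i HH)" by (rule sum.cong[OF refl]) (simp add: Dh)
  also have "\<dots> = cst 2 * HH" using euler[OF HH_Forms] by simp
  finally have "cst 2 * h = cst 2 * HH" .
  then have "cst 2 * (h - HH) = 0" by (simp add: algebra_simps)
  then have "h - HH = 0" by (rule cst2_cancel)
  then show "h = HH" by simp
qed

lemma mv_swap: "(\<Sum>k<4. mv x b k * y k) = (\<Sum>k<4. mv y b k * x k)"
proof -
  have t: "x i * b i k * y k = y k * b k i * x i" for i k by (simp add: bsym[of k i] mult_ac)
  have "(\<Sum>k<4. mv x b k * y k) = (\<Sum>k<4. \<Sum>i<4. x i * b i k * y k)"
    by (simp add: mv_def sum_distrib_right)
  also have "\<dots> = (\<Sum>i<4. \<Sum>k<4. x i * b i k * y k)" by (rule sum.swap)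
  also have "\<dots> = (\<Sum>i<4. \<Sum>k<4. y k * b k i * x i)"
    by (intro sum.cong refl) (rule t)
  also have "\<dots> = (\<Sum>k<4. mv y b k * x k)"
    by (simp add: mv_def sum_distrib_right)
  finally show ?thesis .
qed

lemma peval_HH: "peval HH x = alpha x / 2"
proof -
  have t: "cst a * (V * (cst c * W)) = cst (c * a) * (V * W)" for a c V W
    by (simp add: cst_mult algebra_simps)
  have "HH = (\<Sum>j<4. \<Sum>k<4. cst (1/2) * (Var j * (cst (b j k) * Var k)))"
    unfolding HH_def h0_def lin_def by (simp add: sum_distrib_left)
  also have "\<dots> = (\<Sum>j<4. \<Sum>k<4. cst (b j k * (1/2)) * (Var j * Var k))"
    by (simp only: t)
  finally have "peval HH x = (\<Sum>j<4. \<Sum>k<4. b j k * (1/2) * (x j * x k))"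
    by (simp add: peval_sum peval_cst_mult peval_VV)
  also have "\<dots> = (\<Sum>j<4. \<Sum>k<4. x j * b j k * x k) / 2"
    by (simp add: sum_divide_distrib mult.commute mult.left_commute)
  also have "(\<Sum>j<4. \<Sum>k<4. x j * b j k * x k) = alpha x"
    unfolding alpha_def mv_def by (subst sum.swap) (simp add: sum_distrib_right)
  finally show ?thesis .
qed

end


lemma idx4_bij: "bij_betw idx4 (UNIV::4 set) {0..<4}"
proof -
  have td: "type_definition (Rep_bit0::4 \<Rightarrow> int) Abs_bit0 {0..<2 * int CARD(2)}"
    by (rule type_definition_bit0)
  have r: "range (Rep_bit0::4 \<Rightarrow> int) = {0..<4}"
    using type_definition.Rep_range[OF td] by simp
  have "inj (Rep_bit0::4 \<Rightarrow> int)" using type_definition.Rep_inject[OF td] by (auto simp: inj_on_def)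
  moreover have "inj_on nat {0..<4::int}" by (auto simp: inj_on_def)
  ultimately have "inj idx4" unfolding idx4_def using r
    by (smt (verit) inj_on_def rangeI atLeastLessThan_iff)
  moreover have "idx4 ` UNIV = {0..<4}"
  proof -
    have "nat ` {0..<4::int} = {0..<4}"
      by (auto simp: image_iff) (metis atLeastLessThan_iff nat_int of_nat_0_le_iff of_nat_less_numeral_iff)
    then show ?thesis unfolding idx4_def using r by (metis image_image)
  qed
  ultimately show ?thesis by (simp add: bij_betw_def)
qed

lemma inv4_props:
  shows "i < 4 \<Longrightarrow> idx4 (inv idx4 i) = i" and "inv idx4 (idx4 r) = r" and "idx4 r < 4"
proof -
  have b: "bij_betw idx4 (UNIV::4 set) {0..<4}" by (rule idx4_bij)
  then have inj: "inj idx4" and rg: "range idx4 = {0..<4}" by (auto simp: bij_betw_def)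
  show "i < 4 \<Longrightarrow> idx4 (inv idx4 i) = i" using rg by (intro f_inv_into_f) auto
  show "inv idx4 (idx4 r) = r" using inj by simp
  show "idx4 r < 4" using rg by auto
qed

lemma sum_idx4: "(\<Sum>k<4. F k) = (\<Sum>r\<in>(UNIV::4 set). F (idx4 r))"
  using sum.reindex_bij_betw[OF idx4_bij, of F] by (simp add: lessThan_atLeast0)

lemma inv4:
  fixes A :: "complex^4^4"
  assumes "rank A = 4"
  shows "\<exists>B. B ** A = mat 1 \<and> A ** B = mat 1"
proof -
  have "vec.dim (rows A) = vec.dimension TYPE(complex) TYPE(4)"
    using assms by (simp add: row_rank_def_gen vec.dimension_def card_cart_basis)
  then have "vec.span (rows A) = UNIV" by (simp only: vec.dim_eq_full)
  then obtain B :: "complex^4^4" where "B ** A = mat 1" using matrix_left_invertible_span_rows_gen by blast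
  then show ?thesis using matrix_left_right_inverse by blast
qed

lemma qs_exists:
  assumes q2: "q \<in> Forms 2" and rk: "qrank q = 4"
  shows "\<exists>b. qs q b"
proof -
  define A where "A = qmatrix q"
  have Ae: "A $ r $ s = qa q (idx4 r) (idx4 s)" for r s
    unfolding A_def qmatrix_def qa_def by (simp add: act_mult_left)
  obtain B where BA: "B ** A = mat 1" and AB: "A ** B = mat 1"
    using inv4[of A] rk by (auto simp: A_def qrank_def)
  have At: "transpose A = A"
  proof -
    have "transpose A $ r $ s = A $ r $ s" for r s
      by (simp add: transpose_def Ae qa_sym[of q "idx4 s" "idx4 r"])
    then show ?thesis by (simp add: vec_eq_iff)
  qed
  have Bt: "transpose B = B"
  proof -
    have "transpose B = transpose B ** (A ** B)" by (simp only: AB matrix_mul_rid)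
    also have "\<dots> = (transpose B ** transpose A) ** B" by (simp only: matrix_mul_assoc At)
    also have "\<dots> = transpose (A ** B) ** B" by (simp only: matrix_transpose_mul)
    also have "\<dots> = B" by (simp only: AB transpose_mat matrix_mul_lid)
    finally show ?thesis .
  qed
  have Bs: "B $ r $ s = B $ s $ r" for r s
    using arg_cong[OF Bt, of "\<lambda>M. M $ s $ r"] by (simp add: transpose_def)
  define b where "b i j = (if i < 4 \<and> j < 4 then B $ inv idx4 i $ inv idx4 j else 0)" for i j
  have bsym: "b i j = b j i" for i j unfolding b_def by (simp add: Bs[of "inv idx4 i" "inv idx4 j"])
  have dl4: "(if inv idx4 i = inv idx4 j then 1 else 0) = dl i j" if "i < 4" "j < 4" for i j
  proof (cases "i = j")
    case False
    then have "inv idx4 i \<noteq> inv idx4 j" using inv4_props(1)[OF that(1)] inv4_props(1)[OF that(2)] by metis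
    then show ?thesis using False by (simp add: dl_def)
  qed (simp add: dl_def)
  have inv1: "(\<Sum>k<4. qa q i k * b k j) = dl i j" if i: "i < 4" and j: "j < 4" for i j
  proof -
    have "(\<Sum>k<4. qa q i k * b k j) = (\<Sum>r\<in>UNIV. A $ inv idx4 i $ r * B $ r $ inv idx4 j)"
      unfolding sum_idx4 by (rule sum.cong[OF refl]) (simp add: Ae inv4_props(1)[OF i] inv4_props(1)[OF j] inv4_props(2) inv4_props(3) i j b_def)
    also have "\<dots> = (A ** B) $ inv idx4 i $ inv idx4 j" by (simp add: matrix_matrix_mult_def)
    also have "\<dots> = dl i j" unfolding AB mat_def using dl4[OF i j] by simp
    finally show ?thesis .
  qed
  have inv2: "(\<Sum>k<4. b i k * qa q k j) = dl i j" if i: "i < 4" and j: "j < 4" for i j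
  proof -
    have "(\<Sum>k<4. b i k * qa q k j) = (\<Sum>r\<in>UNIV. B $ inv idx4 i $ r * A $ r $ inv idx4 j)"
      unfolding sum_idx4 by (rule sum.cong[OF refl]) (simp add: Ae inv4_props(1)[OF i] inv4_props(1)[OF j] inv4_props(2) inv4_props(3) i j b_def)
    also have "\<dots> = (B ** A) $ inv idx4 i $ inv idx4 j" by (simp add: matrix_matrix_mult_def)
    also have "\<dots> = dl i j" unfolding BA mat_def using dl4[OF i j] by simp
    finally show ?thesis .
  qed
  have "qs q b"
  proof
    show "q \<in> Forms 2" by (rule q2)
    show "(\<Sum>k<4. qa q i k * b k j) = dl i j" if "i < 4" "j < 4" for i j using that by (rule inv1)
    show "(\<Sum>k<4. b i k * qa q k j) = dl i j" if "i < 4" "j < 4" for i j using that by (rule inv2)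
    show "b i j = b j i" for i j by (rule bsym)
  qed
  then show ?thesis by blast
qed


theorem lemma4p11:
  fixes q l1 l2 :: cpoly
  assumes "q \<in> Forms 2" and "qrank q = 4"
    and "l1 \<in> Forms 1" and "l1 \<noteq> 0" and "l2 \<in> Forms 1" and "l2 \<noteq> 0"
    and "act (qsub q l1) (l2 * l2) = 0"
  shows "(const (act (pl q l2) l1) = 0 \<and> const (act (pl q l1) l2) = 0) \<longleftrightarrow>
         (peval (qinv q) (lcoords l1) = 0 \<or> peval (qinv q) (lcoords l2) = 0)"
proof -
  obtain b where qsb: "qs q b" using qs_exists[OF assms(1,2)] by blast
  interpret qs q b by (rule qsb)
  define c where "c = lcoords l1"
  define d where "d = lcoords l2"
  have l1e: "l1 = lin c" unfolding c_def by (rule rep1_lcoords[OF assms(3)])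
  have l2e: "l2 = lin d" unfolding d_def by (rule rep1_lcoords[OF assms(5)])
  define m where "m = (\<Sum>i<4. mv c b i * d i)"
  have "cst (m^2 - alpha c * alpha d / 6) = cst 0"
    using assms(7) unfolding l1e l2e qsub_eq GG_dd m_def by simp
  then have hyp: "m^2 = alpha c * alpha d / 6" unfolding cst_inj by simp
  have e1: "const (act (pl q l2) l1) = m"
    unfolding pl_def qinv_eq l1e l2e act_lin_HH act_lin_lin m_def const_cst by (rule mv_swap)
  have e2: "const (act (pl q l1) l2) = m"
    unfolding pl_def qinv_eq l1e l2e act_lin_HH act_lin_lin m_def by simp
  have p1: "peval (qinv q) (lcoords l1) = alpha c / 2" unfolding qinv_eq c_def by (rule peval_HH)
  have p2: "peval (qinv q) (lcoords l2) = alpha d / 2" unfolding qinv_eq d_def by (rule peval_HH)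
  have "m = 0 \<longleftrightarrow> alpha c * alpha d = 0" using hyp by auto
  then show ?thesis unfolding e1 e2 p1 p2 by simp
qed

end
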